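(* Let $(W_{i,j})_{i\ge 1,\,0\le j\le N}$ be nonnegative integers with $\sum_i W_{i,j}<\infty$ for each $j$, and for each $j$ let $w_j$ be the one-rowed array consisting of $W_{1,j}$ copies of $1$, $W_{2,j}$ copies of $2$, $\dots$ (in weakly increasing order). Let $(L_{i,j})$ be the image of $(W_{i,j})$ under the tropicalization of the map $(V_{i,j})\mapsto (U_{i,j})$ defined by $$F(V_N)\cdots F(V_1)F(V_0)=F_{N+1}(U_{N+1})\cdots F_2(U_2)F_1(U_1).$$ Then, for $N$ sufficiently large, for all $i,j$ the number of entries equal to $i$ in the $j$-th row of the circled array $w_N\leftharpoonup w_{N-1}\leftharpoonup\cdots\leftharpoonup w_0$ equals $L_{i,j}$.
   Context: Let $M$ be the semifield of germs at $\epsilon=0$ of continuous positive functions $f(\epsilon)$, $\epsilon>0$, with $\lim_{\epsilon\to+0}\epsilon\log f(\epsilon)\in\mathbb{R}$, with usual $+,\cdot,{}^{-1}$, and let $\overline{f}=-\lim_{\epsilon\to+0}\epsilon\log f(\epsilon)$; this is a morphism $M\to\mathbb{R}$ sending $+$ to $\min$, $\cdot$ to $+$, ${}^{-1}$ to negation. For an infinite vector $V=(V_1,V_2,\dots)$, $F(V)$ is the infinite lower bidiagonal matrix with $1$ on the diagonal and $-V_1,-V_2,\dots$ on the subdiagonal, and $F_k(V)=\mathrm{diag}(\mathrm{Id}_{k-1},F(V))$. For vectors $V_j=(V_{1,j},V_{2,j},\dots)$, $j=0,\dots,N$, with entries in $M$, the vectors $U_j=(U_{1,j},U_{2,j},\dots)$,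 $j=1,\dots,N+1$, are uniquely determined by the displayed matrix equation and each $U_{i,j}$ is a subtraction-free rational expression in the $V$'s; the tropicalization is the piecewise-linear map $(W_{i,j})\mapsto(L_{i,j})$ obtained by replacing $+,\cdot,{}^{-1}$ by $\min,+,-$ in these expressions, i.e. $L_{i,j}=\overline{U_{i,j}}$ whenever $W_{i,j}=\overline{V_{i,j}}$. A circled array is a finite list of rows (row $1$, row $2$, $\dots$), each a finite weakly increasing sequence of positive integers regarded as circled numbers (empty rows allowed). A one-rowed array is a finite weakly increasing sequence of positive integers (boxed numbers). The action $C\leftharpoonup x$ of a one-rowed array $x$ on a circled array $C$ with rows $C_1,\dots,C_r$: put $x^{(1)}=x$; for $p=1,\dots,r$, list the circled entries of $C_p$ and the boxed entries of $x^{(p)}$ as a sequence of cells in the order: circled $1$'s, boxed $1$'s, circled $2$'s, boxed $2$'s, $\dots$. Regard circled cells as cells containing a ball and boxed cells as empty cells and perform one step of the Takahashi–Satsuma box-ball system: balls are moved one at a time from left to right, each to the nearest cell to its right that was originally empty and is not yet occupied by a moved ball; a ball with no such cell is discarded. Then each cell originally containing a ball becomes a boxed cell with its number decreased by one, each originally empty cell receiving a ball becomes a circled cell with the same number, other cells are unchanged, and boxed cells with number $0$ are deleted. The circled numbers, in order, form the new row $p$, and the boxed numbers, in order, form $x^{(p+1)}$. Finally $x^{(r+1)}$ is appended as a new last row (circled). For one-rowed arrays $x_1,\dots,x_n$, $x_1\leftharpoonup x_2\leftharpoonup\cdots\leftharpoonup x_n$ denotes the circled array obtained by acting successively with $x_1$,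 then $x_2$, $\dots$, then $x_n$ on the array with no rows. *)

theory Defs
  imports Complex_Main
begin

text \<open>A germ at 0 from the right is represented by a function real \<Rightarrow> real; only its
  values on some interval (0, delta) matter.  f is in M if it is continuous and positive on
  some (0, delta) and e * ln (f e) has a real limit as e tends to 0 from the right.\<close>

definition inM :: "(real \<Rightarrow> real) \<Rightarrow> bool" where
  "inM f \<longleftrightarrow> (\<exists>d>0. continuous_on {0<..<d} f \<and> (\<forall>e\<in>{0<..<d}. 0 < f e))
      \<and> (\<exists>c. ((\<lambda>e. e * ln (f e)) \<longlongrightarrow> c) (at_right 0))"

definition trop :: "(real \<Rightarrow> real) \<Rightarrow> real" where
  "trop f = - Lim (at_right 0) (\<lambda>e. e * ln (f e))"

text \<open>Matrices are indexed from 0 (row/column p corresponds to the paper's p+1);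
  vectors V = (V_1, V_2, ...) are indexed from 1.  All matrices below are lower
  triangular, so the product entry (a,b) is the finite sum over b \<le> c \<le> a.\<close>

definition idm :: "nat \<Rightarrow> nat \<Rightarrow> real" where
  "idm a b = (if a = b then 1 else 0)"

definition lmul :: "(nat \<Rightarrow> nat \<Rightarrow> real) \<Rightarrow> (nat \<Rightarrow> nat \<Rightarrow> real) \<Rightarrow> nat \<Rightarrow> nat \<Rightarrow> real" where
  "lmul A B a b = (\<Sum>c\<in>{b..a}. A a c * B c b)"

definition mprod :: "(nat \<Rightarrow> nat \<Rightarrow> real) list \<Rightarrow> nat \<Rightarrow> nat \<Rightarrow> real" where
  "mprod Ms = foldr lmul Ms idm"

definition Fm :: "(nat \<Rightarrow> real) \<Rightarrow> nat \<Rightarrow> nat \<Rightarrow> real" where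
  "Fm v a b = (if a = b then 1 else if a = Suc b then - v (Suc b) else 0)"

text \<open>F_k(V) = diag(Id_{k-1}, F(V)), for k \<ge> 1.\<close>
definition Fkm :: "nat \<Rightarrow> (nat \<Rightarrow> real) \<Rightarrow> nat \<Rightarrow> nat \<Rightarrow> real" where
  "Fkm k v a b = (if a < k - 1 \<or> b < k - 1 then (if a = b then 1 else 0)
                  else Fm v (a - (k - 1)) (b - (k - 1)))"

text \<open>Cells of one row: a list of (number, has_ball) pairs, in the order
  circled 1's, boxed 1's, circled 2's, boxed 2's, ...  (circled = ball).\<close>
definition cells :: "nat list \<Rightarrow> nat list \<Rightarrow> (nat \<times> bool) list" where
  "cells C x = concat (map (\<lambda>k. replicate (count_list C k) (k, True) @ replicate (count_list x k) (k, False))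
                 [1..<Suc (Max (insert 0 (set C \<union> set x)))])"

text \<open>One Takahashi-Satsuma step: balls are moved one at a time from left to right, each to
  the nearest cell to its right which was originally empty and is not yet occupied by a moved
  ball (if none exists, the ball is discarded).\<close>
definition tsstep :: "bool list \<Rightarrow> nat set" where
  "tsstep bs = fold (\<lambda>a S. if (\<exists>c. a < c \<and> c < length bs \<and> \<not> bs ! c \<and> c \<notin> S)
                           then insert (LEAST c. a < c \<and> c < length bs \<and> \<not> bs ! c \<and> c \<notin> S) S
                           else S)
                  (filter (\<lambda>a. bs ! a) [0..<length bs]) {}"

definition bbrow :: "nat list \<Rightarrow> nat list \<Rightarrow> nat list \<times> nat list" where
  "bbrow C x = (let cs = cells C x; S = tsstep (map snd cs); n = length cs in
     ( map (\<lambda>a. fst (cs ! a)) (filter (\<lambda>a. \<not> snd (cs ! a) \<and> a \<in> S) [0..<n]),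
       map (\<lambda>a. if snd (cs ! a) then fst (cs ! a) - 1 else fst (cs ! a))
         (filter (\<lambda>a. if snd (cs ! a) then fst (cs ! a) - 1 \<noteq> 0 else a \<notin> S) [0..<n])))"

fun act :: "nat list list \<Rightarrow> nat list \<Rightarrow> nat list list" where
  "act [] x = [x]"
| "act (r # rs) x = (let (r', x') = bbrow r x in r' # act rs x')"

text \<open>x_1 \<leftharpoonup> x_2 \<leftharpoonup> ... \<leftharpoonup> x_n : act with x_1, then x_2, ..., on the empty array.\<close>
definition acts :: "nat list list \<Rightarrow> nat list list" where
  "acts xs = foldl act [] xs"

definition warr :: "(nat \<Rightarrow> nat \<Rightarrow> nat) \<Rightarrow> nat \<Rightarrow> nat list" where
  "warr W j = concat (map (\<lambda>i. replicate (W i j) i)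
                 [1..<Suc (Max (insert 0 {i. 1 \<le> i \<and> W i j \<noteq> 0}))])"

end

theory Submission
  imports Defs
begin

definition eqK :: "nat \<Rightarrow> (nat \<Rightarrow> nat \<Rightarrow> real) \<Rightarrow> (nat \<Rightarrow> nat \<Rightarrow> real) \<Rightarrow> bool" where
  "eqK K A B \<longleftrightarrow> (\<forall>a b. b \<le> a \<longrightarrow> a < K \<longrightarrow> A a b = B a b)"
definition eqL :: "(nat \<Rightarrow> nat \<Rightarrow> real) \<Rightarrow> (nat \<Rightarrow> nat \<Rightarrow> real) \<Rightarrow> bool" where
  "eqL A B \<longleftrightarrow> (\<forall>a b. b \<le> a \<longrightarrow> A a b = B a b)"

lemma eqL_K: "eqL A B \<Longrightarrow> eqK K A B" by (auto simp: eqL_def eqK_def)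
lemma eqL_refl[simp]: "eqL A A" by (simp add: eqL_def)
lemma eqL_sym: "eqL A B \<Longrightarrow> eqL B A" by (simp add: eqL_def)
lemma eqL_trans: "eqL A B \<Longrightarrow> eqL B C \<Longrightarrow> eqL A C" by (simp add: eqL_def)
lemma eqK_refl[simp]: "eqK K A A" by (simp add: eqK_def)
lemma eqK_sym: "eqK K A B \<Longrightarrow> eqK K B A" by (simp add: eqK_def)
lemma eqK_trans: "eqK K A B \<Longrightarrow> eqK K B C \<Longrightarrow> eqK K A C" by (simp add: eqK_def)

lemma lmul_congK: "eqK K A A' \<Longrightarrow> eqK K B B' \<Longrightarrow> eqK K (lmul A B) (lmul A' B')"
  unfolding eqK_def lmul_def by (auto intro!: sum.cong)

lemma lmul_congL: "eqL A A' \<Longrightarrow> eqL B B' \<Longrightarrow> eqL (lmul A B) (lmul A' B')"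
  unfolding eqL_def lmul_def by (auto intro!: sum.cong)

lemma sum_ivl_restr: "(b::nat) \<le> c \<Longrightarrow> (\<Sum>d\<in>{c..a}. f d) = (\<Sum>d\<in>{b..a}. if c \<le> d then f d else (0::real))"
proof -
  assume "b \<le> c"
  then have "{c..a} = {d\<in>{b..a}. c \<le> d}" by auto
  then show ?thesis by (simp only: sum.inter_filter[OF finite_atLeastAtMost])
qed

lemma sum_ivl_restr2: "(d::nat) \<le> a \<Longrightarrow> (\<Sum>c\<in>{b..d}. f c) = (\<Sum>c\<in>{b..a}. if c \<le> d then f c else (0::real))"
proof -
  assume "d \<le> a"
  then have "{b..d} = {c\<in>{b..a}. c \<le> d}" by auto
  then show ?thesis by (simp only: sum.inter_filter[OF finite_atLeastAtMost])
qed

lemma lmul_assoc: "lmul (lmul A B) C = lmul A (lmul B C)"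
proof (intro ext)
  fix a b
  have "lmul (lmul A B) C a b = (\<Sum>c\<in>{b..a}. \<Sum>d\<in>{b..a}. if c \<le> d then A a d * B d c * C c b else 0)"
    unfolding lmul_def sum_distrib_right by (intro sum.cong refl sum_ivl_restr) auto
  also have "\<dots> = (\<Sum>d\<in>{b..a}. \<Sum>c\<in>{b..a}. if c \<le> d then A a d * B d c * C c b else 0)"
    by (rule sum.swap)
  also have "\<dots> = lmul A (lmul B C) a b"
    unfolding lmul_def sum_distrib_left
  proof (rule sum.cong[OF refl])
    fix d assume "d \<in> {b..a}"
    then show "(\<Sum>c\<in>{b..a}. if c \<le> d then A a d * B d c * C c b else 0) = (\<Sum>c\<in>{b..d}. A a d * (B d c * C c b))"
      unfolding mult.assoc using sum_ivl_restr2[where d=d and a=a and b=b and f="\<lambda>c. A a d * (B d c * C c b)"] by simp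
  qed
  finally show "lmul (lmul A B) C a b = lmul A (lmul B C) a b" .
qed

lemma lmul_idm_left: "eqL (lmul idm B) B"
  unfolding eqL_def lmul_def idm_def
proof (intro allI impI)
  fix a b :: nat assume "b \<le> a"
  have "(\<Sum>c\<in>{b..a}. (if a = c then 1 else 0) * B c b) = (\<Sum>c\<in>{b..a}. if a = c then B c b else 0)"
    by (intro sum.cong) auto
  then show "(\<Sum>c\<in>{b..a}. (if a = c then 1 else 0) * B c b) = B a b" using \<open>b \<le> a\<close> by (simp add: sum.delta)
qed

lemma lmul_idm_right: "eqL (lmul A idm) A"
  unfolding eqL_def lmul_def idm_def
  by (auto simp: sum.delta' if_distrib cong: if_cong)

lemma mprod_append: "eqL (mprod (xs @ ys)) (lmul (mprod xs) (mprod ys))"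
proof (induction xs)
  case Nil then show ?case by (simp add: mprod_def eqL_sym[OF lmul_idm_left])
next
  case (Cons x xs)
  have "eqL (lmul x (mprod (xs @ ys))) (lmul x (lmul (mprod xs) (mprod ys)))"
    by (rule lmul_congL[OF eqL_refl Cons.IH])
  then show ?case by (simp add: mprod_def lmul_assoc)
qed

lemma mprod_snoc: "eqL (mprod (xs @ [y])) (lmul (mprod xs) y)"
  using mprod_append[of xs "[y]"] lmul_congL[OF eqL_refl lmul_idm_right, of "mprod xs" y]
  by (auto simp: mprod_def intro: eqL_trans)

definition shm :: "nat \<Rightarrow> (nat \<Rightarrow> nat \<Rightarrow> real) \<Rightarrow> nat \<Rightarrow> nat \<Rightarrow> real" where
  "shm s M a b = (if a < s \<or> b < s then idm a b else M (a - s) (b - s))"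

lemma Fkm_shm: "Fkm k v = shm (k - 1) (Fm v)"
  by (intro ext) (simp add: Fkm_def shm_def idm_def)

lemma shm_idm[simp]: "shm s idm = idm"
  by (intro ext) (auto simp: shm_def idm_def)

lemma shm_0[simp]: "shm 0 M = M"
  by (intro ext) (simp add: shm_def)

lemma shm_shm: "shm s (shm t M) = shm (s + t) M"
  by (intro ext) (auto simp: shm_def idm_def)

lemma shm_congL: "eqL A B \<Longrightarrow> eqL (shm s A) (shm s B)"
  by (auto simp: eqL_def shm_def)

lemma shm_lmul: "eqL (lmul (shm s A) (shm s B)) (shm s (lmul A B))"
  unfolding eqL_def
proof (intro allI impI)
  fix a b :: nat assume ba: "b \<le> a"
  show "lmul (shm s A) (shm s B) a b = shm s (lmul A B) a b"
  proof (cases "b < s")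
    case True
    have "lmul (shm s A) (shm s B) a b = (\<Sum>c\<in>{b..a}. shm s A a c * (if c = b then 1 else 0))"
      unfolding lmul_def using True by (intro sum.cong) (auto simp: shm_def idm_def)
    also have "\<dots> = shm s A a b" using ba by (simp add: if_distrib sum.delta' cong: if_cong)
    also have "\<dots> = shm s (lmul A B) a b" using True by (simp add: shm_def)
    finally show ?thesis .
  next
    case False
    then have "\<not> a < s" using ba by simp
    have "lmul (shm s A) (shm s B) a b = (\<Sum>c\<in>{b..a}. A (a - s) (c - s) * B (c - s) (b - s))"
      unfolding lmul_def using False ba by (intro sum.cong) (auto simp: shm_def)
    also have "\<dots> = (\<Sum>c\<in>(\<lambda>c. c + s) ` {b - s..a - s}. A (a - s) (c - s) * B (c - s) (b - s))"
      using False \<open>\<not> a < s\<close> by (intro sum.cong refl) (auto simp: image_iff intro!: exI[of _ "_ - s"])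
    also have "\<dots> = (\<Sum>c\<in>{b - s..a - s}. A (a - s) c * B c (b - s))"
      by (subst sum.reindex) (auto simp: inj_on_def)
    also have "\<dots> = shm s (lmul A B) a b" using False \<open>\<not> a < s\<close> by (simp add: shm_def lmul_def)
    finally show ?thesis .
  qed
qed

definition bidiag :: "(nat \<Rightarrow> nat \<Rightarrow> real) \<Rightarrow> bool" where
  "bidiag A \<longleftrightarrow> (\<forall>a c. c \<noteq> a \<and> a \<noteq> Suc c \<longrightarrow> A a c = 0)"

lemma lmul_bidiag:
  assumes "bidiag A" "b \<le> a"
  shows "lmul A B a b = A a a * B a b + (if b < a then A a (a - 1) * B (a - 1) b else 0)"
proof (cases "b < a")
  case False
  then have "a = b" using assms by simp
  then show ?thesis by (simp add: lmul_def)
next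
  case True
  have "lmul A B a b = (\<Sum>c\<in>{a - 1, a}. A a c * B c b)"
    unfolding lmul_def using assms True
    by (intro sum.mono_neutral_right) (auto simp: bidiag_def)
  also have "\<dots> = A a a * B a b + A a (a - 1) * B (a - 1) b" using True by simp
  finally show ?thesis using True by simp
qed

lemma bidiag_Fm: "bidiag (Fm v)" by (auto simp: bidiag_def Fm_def)
lemma bidiag_shm: "bidiag M \<Longrightarrow> bidiag (shm s M)"
  unfolding bidiag_def shm_def idm_def
proof (intro allI impI)
  fix a c assume H: "\<forall>a c. c \<noteq> a \<and> a \<noteq> Suc c \<longrightarrow> M a c = 0" and ac: "c \<noteq> a \<and> a \<noteq> Suc c"
  show "(if a < s \<or> c < s then if a = c then 1 else 0 else M (a - s) (c - s)) = 0"
  proof (cases "a < s \<or> c < s")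
    case False
    then have "c - s \<noteq> a - s \<and> a - s \<noteq> Suc (c - s)" using ac by auto
    then show ?thesis using H False by auto
  qed (use ac in auto)
qed

lemma Fm_diag[simp]: "Fm v a a = 1" by (simp add: Fm_def)
lemma Fm_sub[simp]: "Fm v (Suc b) b = - v (Suc b)" by (simp add: Fm_def)
lemma Fm_far: "a \<noteq> b \<Longrightarrow> a \<noteq> Suc b \<Longrightarrow> Fm v a b = 0" by (simp add: Fm_def)

fun edd :: "(nat \<Rightarrow> real \<Rightarrow> real) \<Rightarrow> (nat \<Rightarrow> real \<Rightarrow> real) \<Rightarrow> nat \<Rightarrow> real \<Rightarrow> real" where
  "edd r x 0 e = r 1 e"
| "edd r x (Suc n) e = r (Suc (Suc n)) e * edd r x n e / (edd r x n e + x (Suc n) e)"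

definition emr :: "(nat \<Rightarrow> real \<Rightarrow> real) \<Rightarrow> (nat \<Rightarrow> real \<Rightarrow> real) \<Rightarrow> nat \<Rightarrow> real \<Rightarrow> real" where
  "emr r x i e = x i e + edd r x (i - 1) e"
definition emx :: "(nat \<Rightarrow> real \<Rightarrow> real) \<Rightarrow> (nat \<Rightarrow> real \<Rightarrow> real) \<Rightarrow> nat \<Rightarrow> real \<Rightarrow> real" where
  "emx r x i e = r (Suc i) e * x i e / emr r x i e"

definition posat :: "(nat \<Rightarrow> real \<Rightarrow> real) \<Rightarrow> real \<Rightarrow> bool" where
  "posat r e \<longleftrightarrow> (\<forall>i\<ge>1. r i e > 0)"

lemma edd_pos: "posat r e \<Longrightarrow> posat x e \<Longrightarrow> edd r x n e > 0"
proof (induction n)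
  case (Suc n)
  have "r (Suc (Suc n)) e > 0" "x (Suc n) e > 0" using Suc.prems by (auto simp: posat_def)
  then show ?case using Suc by (simp add: add_pos_pos)
qed (auto simp: posat_def)

lemma emr_pos: "posat r e \<Longrightarrow> posat x e \<Longrightarrow> posat (emr r x) e"
  unfolding posat_def emr_def using edd_pos[of r e x] by (auto simp: posat_def add_pos_pos)

lemma emx_pos: "posat r e \<Longrightarrow> posat x e \<Longrightarrow> posat (emx r x) e"
  using emr_pos[of r e x] unfolding posat_def emx_def by auto

lemma move_eq:
  assumes pr: "posat r e" and px: "posat x e"
  shows "eqL (lmul (Fm (\<lambda>i. r i e)) (Fm (\<lambda>i. x i e)))
             (lmul (shm 1 (Fm (\<lambda>i. emx r x i e))) (Fm (\<lambda>i. emr r x i e)))"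
  unfolding eqL_def
proof (intro allI impI)
  fix a b :: nat assume ba: "b \<le> a"
  let ?R = "\<lambda>i. r i e" and ?X = "\<lambda>i. x i e" and ?R' = "\<lambda>i. emr r x i e" and ?X' = "\<lambda>i. emx r x i e"
  have L: "lmul (Fm ?R) (Fm ?X) a b = Fm ?R a a * Fm ?X a b + (if b < a then Fm ?R a (a - 1) * Fm ?X (a - 1) b else 0)"
    by (rule lmul_bidiag[OF bidiag_Fm ba])
  have R: "lmul (shm 1 (Fm ?X')) (Fm ?R') a b = shm 1 (Fm ?X') a a * Fm ?R' a b + (if b < a then shm 1 (Fm ?X') a (a - 1) * Fm ?R' (a - 1) b else 0)"
    by (rule lmul_bidiag[OF bidiag_shm[OF bidiag_Fm] ba])
  have shd: "shm 1 (Fm ?X') a a = 1" by (simp add: shm_def idm_def)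
  have dp: "\<And>n. edd r x n e > 0" using edd_pos[OF pr px] .
  have rp: "\<And>i. i \<ge> 1 \<Longrightarrow> r i e > 0" and xp: "\<And>i. i \<ge> 1 \<Longrightarrow> x i e > 0" using pr px by (auto simp: posat_def)
  consider "a = b" | "a = Suc b" | "a = Suc (Suc b)" | "Suc (Suc b) < a" using ba by linarith
  then show "lmul (Fm ?R) (Fm ?X) a b = lmul (shm 1 (Fm ?X')) (Fm ?R') a b"
  proof cases
    case 1 then show ?thesis using L R shd by simp
  next
    case 2
    show ?thesis
    proof (cases b)
      case 0
      then show ?thesis using L R shd 2 by (simp add: shm_def idm_def emr_def)
    next
      case (Suc m)
      have e1: "emr r x (Suc b) e + emx r x b e = r (Suc b) e + x (Suc b) e"
      proof -
        have "edd r x m e + x (Suc m) e > 0" using dp[of m] xp[of "Suc m"] by simp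
        have q: "r (Suc (Suc m)) e * edd r x m e / (edd r x m e + x (Suc m) e) + r (Suc (Suc m)) e * x (Suc m) e / (x (Suc m) e + edd r x m e) = r (Suc (Suc m)) e"
          using \<open>edd r x m e + x (Suc m) e > 0\<close> by (simp add: add.commute add_divide_distrib[symmetric] ring_distribs[symmetric])
        show ?thesis using Suc q by (simp add: emr_def emx_def)
      qed
      show ?thesis using L R shd 2 Suc e1 by (simp add: shm_def idm_def algebra_simps)
    qed
  next
    case 3
    have ne: "emr r x (Suc b) e \<noteq> 0" using emr_pos[OF pr px] unfolding posat_def
      by (metis le_add1 less_irrefl plus_1_eq_Suc)
    have "emx r x (Suc b) e * emr r x (Suc b) e = r (Suc (Suc b)) e * x (Suc b) e"
      using ne by (simp add: emx_def)
    then show ?thesis using L R 3 by (simp add: shm_def idm_def Fm_far)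
  next
    case 4
    then show ?thesis using L R by (simp add: shm_def idm_def Fm_far)
  qed
qed

fun Pl :: "(nat \<Rightarrow> real) list \<Rightarrow> nat \<Rightarrow> nat \<Rightarrow> real" where
  "Pl [] = idm"
| "Pl (u # us) = lmul (shm 1 (Pl us)) (Fm u)"

fun eact :: "(nat \<Rightarrow> real \<Rightarrow> real) list \<Rightarrow> (nat \<Rightarrow> real \<Rightarrow> real) \<Rightarrow> (nat \<Rightarrow> real \<Rightarrow> real) list" where
  "eact [] x = [x]"
| "eact (r # rs) x = emr r x # eact rs (emx r x)"

definition eacts :: "(nat \<Rightarrow> real \<Rightarrow> real) list \<Rightarrow> (nat \<Rightarrow> real \<Rightarrow> real) list" where
  "eacts xs = foldl eact [] xs"

definition atv :: "(nat \<Rightarrow> real \<Rightarrow> real) \<Rightarrow> real \<Rightarrow> nat \<Rightarrow> real" where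
  "atv f e = (\<lambda>i. f i e)"

lemma length_eact[simp]: "length (eact rs x) = Suc (length rs)"
  by (induction rs arbitrary: x) auto

lemma length_eacts[simp]: "length (eacts xs) = length xs"
  unfolding eacts_def by (induction xs rule: rev_induct) auto

lemma eact_pos: "list_all (\<lambda>r. posat r e) rs \<Longrightarrow> posat x e \<Longrightarrow> list_all (\<lambda>r. posat r e) (eact rs x)"
  by (induction rs arbitrary: x) (auto intro: emr_pos emx_pos)

lemma eact_eq: "list_all (\<lambda>r. posat r e) rs \<Longrightarrow> posat x e \<Longrightarrow>
   eqL (lmul (Pl (map (\<lambda>r. atv r e) rs)) (Fm (atv x e))) (Pl (map (\<lambda>r. atv r e) (eact rs x)))"
proof (induction rs arbitrary: x)
  case Nil then show ?case by simp
next
  case (Cons r rs)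
  have pr: "posat r e" and prs: "list_all (\<lambda>r. posat r e) rs" using Cons.prems by auto
  let ?P = "Pl (map (\<lambda>r. atv r e) rs)"
  have "lmul (Pl (map (\<lambda>r. atv r e) (r # rs))) (Fm (atv x e)) = lmul (shm 1 ?P) (lmul (Fm (atv r e)) (Fm (atv x e)))"
    by (simp add: lmul_assoc)
  moreover have "eqL (lmul (shm 1 ?P) (lmul (Fm (atv r e)) (Fm (atv x e))))
      (lmul (shm 1 ?P) (lmul (shm 1 (Fm (atv (emx r x) e))) (Fm (atv (emr r x) e))))"
    using move_eq[OF pr Cons.prems(2)] by (intro lmul_congL[OF eqL_refl]) (simp add: atv_def)
  moreover have "lmul (shm 1 ?P) (lmul (shm 1 (Fm (atv (emx r x) e))) (Fm (atv (emr r x) e)))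
      = lmul (lmul (shm 1 ?P) (shm 1 (Fm (atv (emx r x) e)))) (Fm (atv (emr r x) e))"
    by (simp add: lmul_assoc)
  moreover have "eqL (lmul (lmul (shm 1 ?P) (shm 1 (Fm (atv (emx r x) e)))) (Fm (atv (emr r x) e)))
      (lmul (shm 1 (lmul ?P (Fm (atv (emx r x) e)))) (Fm (atv (emr r x) e)))"
    by (intro lmul_congL shm_lmul eqL_refl)
  moreover have "eqL (lmul (shm 1 (lmul ?P (Fm (atv (emx r x) e)))) (Fm (atv (emr r x) e)))
      (lmul (shm 1 (Pl (map (\<lambda>r. atv r e) (eact rs (emx r x))))) (Fm (atv (emr r x) e)))"
    using Cons.IH[OF prs emx_pos[OF pr Cons.prems(2)]] by (intro lmul_congL shm_congL eqL_refl)
  ultimately show ?case by (auto intro: eqL_trans)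
qed

lemma eacts_eq: "list_all (\<lambda>r. posat r e) xs \<Longrightarrow>
   eqL (mprod (map (\<lambda>v. Fm (atv v e)) xs)) (Pl (map (\<lambda>r. atv r e) (eacts xs)))
   \<and> list_all (\<lambda>r. posat r e) (eacts xs)"
proof (induction xs rule: rev_induct)
  case Nil then show ?case by (simp add: mprod_def eacts_def)
next
  case (snoc y xs)
  then have IH: "eqL (mprod (map (\<lambda>v. Fm (atv v e)) xs)) (Pl (map (\<lambda>r. atv r e) (eacts xs)))"
    and P: "list_all (\<lambda>r. posat r e) (eacts xs)" and py: "posat y e" by auto
  have e: "eacts (xs @ [y]) = eact (eacts xs) y" by (simp add: eacts_def)
  have "eqL (mprod (map (\<lambda>v. Fm (atv v e)) (xs @ [y]))) (lmul (mprod (map (\<lambda>v. Fm (atv v e)) xs)) (Fm (atv y e)))"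
    using mprod_snoc by simp
  moreover have "eqL (lmul (mprod (map (\<lambda>v. Fm (atv v e)) xs)) (Fm (atv y e))) (lmul (Pl (map (\<lambda>r. atv r e) (eacts xs))) (Fm (atv y e)))"
    using IH by (intro lmul_congL eqL_refl)
  ultimately show ?case using eact_eq[OF P py] eact_pos[OF P py] e by (auto intro: eqL_trans)
qed

lemma mprod_Fkm: "eqL (mprod (map (\<lambda>k. Fkm k (u k)) (rev [Suc s..<Suc s + m]))) (shm s (Pl (map u [Suc s..<Suc s + m])))"
proof (induction m arbitrary: s)
  case 0 then show ?case by (simp add: mprod_def)
next
  case (Suc m)
  have l: "[Suc s..<Suc s + Suc m] = Suc s # [Suc (Suc s)..<Suc (Suc s) + m]" by (simp add: upt_conv_Cons)
  let ?T = "[Suc (Suc s)..<Suc (Suc s) + m]"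
  have F1: "eqL (mprod (map (\<lambda>k. Fkm k (u k)) (rev ?T) @ [Fkm (Suc s) (u (Suc s))]))
            (lmul (mprod (map (\<lambda>k. Fkm k (u k)) (rev ?T))) (Fkm (Suc s) (u (Suc s))))"
    by (rule mprod_snoc)
  have F2: "eqL (lmul (mprod (map (\<lambda>k. Fkm k (u k)) (rev ?T))) (Fkm (Suc s) (u (Suc s))))
        (lmul (shm (Suc s) (Pl (map u ?T))) (Fkm (Suc s) (u (Suc s))))"
    using Suc.IH[of "Suc s"] by (intro lmul_congL eqL_refl) simp
  have F3: "lmul (shm (Suc s) (Pl (map u ?T))) (Fkm (Suc s) (u (Suc s)))
       = lmul (shm s (shm 1 (Pl (map u ?T)))) (shm s (Fm (u (Suc s))))"
    by (simp add: shm_shm Fkm_shm)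
  have F4: "eqL (lmul (shm s (shm 1 (Pl (map u ?T)))) (shm s (Fm (u (Suc s))))) (shm s (Pl (u (Suc s) # map u ?T)))"
    by (simp only: Pl.simps shm_lmul)
  have E1: "map (\<lambda>k. Fkm k (u k)) (rev [Suc s..<Suc s + Suc m]) = map (\<lambda>k. Fkm k (u k)) (rev ?T) @ [Fkm (Suc s) (u (Suc s))]"
    unfolding l by (simp only: rev.simps map_append list.map)
  have E2: "map u [Suc s..<Suc s + Suc m] = u (Suc s) # map u ?T" unfolding l by (simp only: list.map)
  show ?case unfolding E1 E2 using eqL_trans[OF F1 eqL_trans[OF F2 F4[folded F3]]] .
qed

definition Finv :: "(nat \<Rightarrow> real) \<Rightarrow> nat \<Rightarrow> nat \<Rightarrow> real" where
  "Finv u a b = (if b \<le> a then \<Prod>i\<in>{Suc b..a}. u i else 0)"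

lemma Fm_Finv: "eqL (lmul (Fm u) (Finv u)) idm"
  unfolding eqL_def
proof (intro allI impI)
  fix a b :: nat assume ba: "b \<le> a"
  show "lmul (Fm u) (Finv u) a b = idm a b"
  proof (cases "b < a")
    case True
    then obtain a' where a': "a = Suc a'" "b \<le> a'" by (cases a) auto
    have "(\<Prod>i\<in>{Suc b..Suc a'}. u i) = (\<Prod>i\<in>{Suc b..a'}. u i) * u (Suc a')"
      using a' by (simp add: prod.nat_ivl_Suc')
    then show ?thesis using lmul_bidiag[OF bidiag_Fm ba, of u "Finv u"] True a'
      by (simp add: Finv_def idm_def)
  next
    case False
    then show ?thesis using lmul_bidiag[OF bidiag_Fm ba, of u "Finv u"] ba by (simp add: Finv_def idm_def)
  qed
qed

lemma Pl_diag[simp]: "Pl us a a = 1"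
proof (induction us arbitrary: a)
  case Nil then show ?case by (simp add: idm_def)
next
  case (Cons u us) then show ?case by (simp add: lmul_def shm_def idm_def)
qed

lemma uniq_step:
  assumes pos: "\<forall>i\<ge>1. u i > 0"
    and H: "eqK K (lmul (shm 1 A) (Fm u)) (lmul (shm 1 B) (Fm w))"
    and Bd: "\<forall>a. B a a = 1"
  shows "(\<forall>i. 1 \<le> i \<and> i < K \<longrightarrow> w i = u i) \<and> eqK (K - 1) A B"
proof -
  define G where "G = lmul (Fm w) (Finv u)"
  have h0: "eqK K (lmul (lmul (shm 1 A) (Fm u)) (Finv u)) (lmul (lmul (shm 1 B) (Fm w)) (Finv u))"
    by (rule lmul_congK[OF H eqK_refl])
  have l1: "eqK K (lmul (lmul (shm 1 A) (Fm u)) (Finv u)) (shm 1 A)"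
  proof -
    have "eqL (lmul (shm 1 A) (lmul (Fm u) (Finv u))) (lmul (shm 1 A) idm)"
      by (rule lmul_congL[OF eqL_refl Fm_Finv])
    then show ?thesis using lmul_idm_right[of "shm 1 A"] by (auto simp: lmul_assoc intro: eqL_K eqL_trans)
  qed
  have h1: "eqK K (shm 1 A) (lmul (shm 1 B) G)"
    using h0 l1 by (auto simp: lmul_assoc G_def intro: eqK_trans eqK_sym)
  have G0: "G c 0 = (\<Prod>i\<in>{1..c}. u i) - w c * (\<Prod>i\<in>{1..c - 1}. u i)" if c1: "c \<ge> 1" for c
  proof -
    obtain c' where c': "c = Suc c'" using c1 by (cases c) auto
    show ?thesis using lmul_bidiag[OF bidiag_Fm, of 0 c w "Finv u"] c' by (simp add: G_def Finv_def)
  qed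
  have Gz: "G c 0 = 0" if "1 \<le> c" "c < K" for c
    using that
  proof (induction c rule: less_induct)
    case (less c)
    have "lmul (shm 1 B) G c 0 = (\<Sum>d\<in>{c}. shm 1 B c d * G d 0)"
      unfolding lmul_def
    proof (rule sum.mono_neutral_right)
      show "\<forall>i\<in>{0..c} - {c}. shm 1 B c i * G i 0 = 0"
      proof
        fix d assume "d \<in> {0..c} - {c}"
        then have "d < c" by auto
        show "shm 1 B c d * G d 0 = 0"
        proof (cases "d = 0")
          case True then show ?thesis using less.prems by (simp add: shm_def idm_def)
        next
          case False then show ?thesis using less.IH[of d] \<open>d < c\<close> less.prems by simp
        qed
      qed
    qed auto
    also have "\<dots> = G c 0" using less.prems Bd by (simp add: shm_def)
    finally have "lmul (shm 1 B) G c 0 = G c 0" .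
    moreover have "shm 1 A c 0 = 0" using less.prems by (simp add: shm_def idm_def)
    ultimately show ?case using h1 less.prems unfolding eqK_def by force
  qed
  have wu: "w i = u i" if "1 \<le> i" "i < K" for i
  proof -
    have pp: "(\<Prod>j\<in>{1..i - 1}. u j) > 0" using pos by (intro prod_pos) auto
    have "(\<Prod>j\<in>{1..i}. u j) = (\<Prod>j\<in>{1..i - 1}. u j) * u i"
      using that prod.nat_ivl_Suc'[of 1 "i - 1" u] by simp
    then have "(\<Prod>j\<in>{1..i - 1}. u j) * (u i - w i) = 0" using G0[of i] Gz[OF that] that by (simp add: algebra_simps del: prod_zero_iff) (metis eq_iff_diff_eq_0 mult.commute)
    then show ?thesis using pp by (metis eq_iff_diff_eq_0 less_irrefl mult_eq_0_iff)
  qed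
  have FwFu: "eqK K (Fm w) (Fm u)"
    unfolding eqK_def using wu by (auto simp: Fm_def)
  have h2: "eqK K (lmul (shm 1 A) (Fm u)) (lmul (shm 1 B) (Fm u))"
    using H lmul_congK[OF eqK_refl FwFu, of "shm 1 B"] by (rule eqK_trans)
  have l2: "eqK K (lmul (lmul (shm 1 B) (Fm u)) (Finv u)) (shm 1 B)"
  proof -
    have "eqL (lmul (shm 1 B) (lmul (Fm u) (Finv u))) (lmul (shm 1 B) idm)"
      by (rule lmul_congL[OF eqL_refl Fm_Finv])
    then show ?thesis using lmul_idm_right[of "shm 1 B"] by (auto simp: lmul_assoc intro: eqL_K eqL_trans)
  qed
  have "eqK K (shm 1 A) (shm 1 B)"
    using lmul_congK[OF h2 eqK_refl, of "Finv u"] l1 l2 by (meson eqK_sym eqK_trans)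
  then have "eqK (K - 1) A B"
    unfolding eqK_def
  proof (intro allI impI)
    fix a b assume H3: "\<forall>a b. b \<le> a \<longrightarrow> a < K \<longrightarrow> shm 1 A a b = shm 1 B a b" and "b \<le> a" "a < K - 1"
    then show "A a b = B a b" using H3[rule_format, of "Suc b" "Suc a"] by (simp add: shm_def)
  qed
  then show ?thesis using wu by auto
qed

lemma uniq: "list_all (\<lambda>u. \<forall>i\<ge>1. u i > 0) us \<Longrightarrow> length ws = length us \<Longrightarrow> eqK K (Pl us) (Pl ws)
   \<Longrightarrow> j < length us \<Longrightarrow> 1 \<le> i \<Longrightarrow> i + j < K \<Longrightarrow> (ws ! j) i = (us ! j) i"
proof (induction us arbitrary: ws K j)
  case Nil then show ?case by simp
next
  case (Cons u us)
  obtain w ws' where ws: "ws = w # ws'" using Cons.prems(2) by (cases ws) auto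
  have st: "(\<forall>i. 1 \<le> i \<and> i < K \<longrightarrow> w i = u i) \<and> eqK (K - 1) (Pl us) (Pl ws')"
    using Cons.prems(1,3) ws by (intro uniq_step) auto
  show ?case
  proof (cases j)
    case 0 then show ?thesis using st ws Cons.prems by auto
  next
    case (Suc j')
    then show ?thesis using Cons.IH[of ws' "K - 1" j'] st ws Cons.prems by auto
  qed
qed

definition hasT :: "(real \<Rightarrow> real) \<Rightarrow> real \<Rightarrow> bool" where
  "hasT f w \<longleftrightarrow> inM f \<and> trop f = w"

lemma hasT_iff: "hasT f w \<longleftrightarrow> (\<exists>d>0. continuous_on {0<..<d} f \<and> (\<forall>e\<in>{0<..<d}. 0 < f e))
   \<and> ((\<lambda>e. e * ln (f e)) \<longlongrightarrow> - w) (at_right 0)"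
proof
  assume "hasT f w"
  then obtain c where c: "((\<lambda>e. e * ln (f e)) \<longlongrightarrow> c) (at_right 0)" and d: "\<exists>d>0. continuous_on {0<..<d} f \<and> (\<forall>e\<in>{0<..<d}. 0 < f e)"
    and t: "trop f = w" unfolding hasT_def inM_def by auto
  have "trop f = - c" unfolding trop_def using tendsto_Lim[OF trivial_limit_at_right_real c] by simp
  then show "(\<exists>d>0. continuous_on {0<..<d} f \<and> (\<forall>e\<in>{0<..<d}. 0 < f e)) \<and> ((\<lambda>e. e * ln (f e)) \<longlongrightarrow> - w) (at_right 0)"
    using c d t by auto
next
  assume H: "(\<exists>d>0. continuous_on {0<..<d} f \<and> (\<forall>e\<in>{0<..<d}. 0 < f e)) \<and> ((\<lambda>e. e * ln (f e)) \<longlongrightarrow> - w) (at_right 0)"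
  then have "trop f = w" unfolding trop_def using tendsto_Lim[OF trivial_limit_at_right_real] by fastforce
  then show "hasT f w" using H unfolding hasT_def inM_def by auto
qed

lemma ev_ivl: "d > 0 \<Longrightarrow> eventually (\<lambda>e::real. e \<in> {0<..<d}) (at_right 0)"
  unfolding eventually_at_right_field by (auto intro!: exI[of _ d])

lemma hasT_pos: "hasT f w \<Longrightarrow> eventually (\<lambda>e. 0 < f e) (at_right 0)"
proof -
  assume "hasT f w"
  then obtain d where d: "d > 0" "\<forall>e\<in>{0<..<d}. 0 < f e" unfolding hasT_iff by auto
  show ?thesis using ev_ivl[OF d(1)] by (rule eventually_mono) (use d in auto)
qed

lemma hasT_cong: "hasT f w \<Longrightarrow> eventually (\<lambda>e. f e = g e) (at_right 0) \<Longrightarrow> hasT g w"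
proof -
  assume H: "hasT f w" and E: "eventually (\<lambda>e. f e = g e) (at_right 0)"
  obtain d where d: "d > 0" "continuous_on {0<..<d} f" "\<forall>e\<in>{0<..<d}. 0 < f e"
    and L: "((\<lambda>e. e * ln (f e)) \<longlongrightarrow> - w) (at_right 0)" using H unfolding hasT_iff by auto
  obtain b where b: "b > 0" "\<forall>y>0. y < b \<longrightarrow> f y = g y" using E unfolding eventually_at_right_field by auto
  define d' where "d' = min d b"
  have "continuous_on {0<..<d'} f" using d(2) by (rule continuous_on_subset) (auto simp: d'_def)
  then have "continuous_on {0<..<d'} g" by (rule continuous_on_cong[THEN iffD1, rotated 2]) (use b in \<open>auto simp: d'_def\<close>)
  moreover have "\<forall>e\<in>{0<..<d'}. 0 < g e"
  proof
    fix e assume e: "e \<in> {0<..<d'}"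
    have "f e = g e" using b(2) e by (auto simp: d'_def)
    moreover have "0 < f e" using d(3) e by (auto simp: d'_def)
    ultimately show "0 < g e" by simp
  qed
  moreover have "((\<lambda>e. e * ln (g e)) \<longlongrightarrow> - w) (at_right 0)"
    using L by (rule tendsto_cong[THEN iffD1, rotated]) (use E in \<open>auto elim!: eventually_mono\<close>)
  ultimately show "hasT g w" unfolding hasT_iff using b d by (auto simp: d'_def intro!: exI[of _ d'])
qed

lemma hasT_one: "hasT (\<lambda>e. 1) 0"
  unfolding hasT_iff by (auto intro!: exI[of _ 1])

lemma hasT_mult: "hasT f a \<Longrightarrow> hasT g b \<Longrightarrow> hasT (\<lambda>e. f e * g e) (a + b)"
proof -
  assume Hf: "hasT f a" and Hg: "hasT g b"
  obtain d1 where d1: "d1 > 0" "continuous_on {0<..<d1} f" "\<forall>e\<in>{0<..<d1}. 0 < f e"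
    and L1: "((\<lambda>e. e * ln (f e)) \<longlongrightarrow> - a) (at_right 0)" using Hf unfolding hasT_iff by auto
  obtain d2 where d2: "d2 > 0" "continuous_on {0<..<d2} g" "\<forall>e\<in>{0<..<d2}. 0 < g e"
    and L2: "((\<lambda>e. e * ln (g e)) \<longlongrightarrow> - b) (at_right 0)" using Hg unfolding hasT_iff by auto
  define d where "d = min d1 d2"
  have d0: "d > 0" using d1 d2 by (simp add: d_def)
  have "continuous_on {0<..<d} (\<lambda>e. f e * g e)"
    by (intro continuous_intros continuous_on_subset[OF d1(2)] continuous_on_subset[OF d2(2)]) (auto simp: d_def)
  moreover have "\<forall>e\<in>{0<..<d}. 0 < f e * g e" using d1 d2 by (auto simp: d_def)
  moreover have "((\<lambda>e. e * ln (f e * g e)) \<longlongrightarrow> - (a + b)) (at_right 0)"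
  proof -
    have "((\<lambda>e. e * ln (f e) + e * ln (g e)) \<longlongrightarrow> - a + - b) (at_right 0)" by (intro tendsto_add L1 L2)
    moreover have "eventually (\<lambda>e. e * ln (f e) + e * ln (g e) = e * ln (f e * g e)) (at_right 0)"
      using ev_ivl[OF d0] proof (rule eventually_mono)
      fix e assume e: "e \<in> {0<..<d}"
      then have "f e > 0" "g e > 0" using d1 d2 by (auto simp: d_def)
      then show "e * ln (f e) + e * ln (g e) = e * ln (f e * g e)" by (simp add: ln_mult distrib_left)
    qed
    ultimately show ?thesis by (simp add: tendsto_cong)
  qed
  ultimately show ?thesis unfolding hasT_iff using d1 d2 by (auto simp: d_def intro!: exI[of _ d])
qed

lemma hasT_div: "hasT f a \<Longrightarrow> hasT g b \<Longrightarrow> hasT (\<lambda>e. f e / g e) (a - b)"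
proof -
  assume Hf: "hasT f a" and Hg: "hasT g b"
  obtain d1 where d1: "d1 > 0" "continuous_on {0<..<d1} f" "\<forall>e\<in>{0<..<d1}. 0 < f e"
    and L1: "((\<lambda>e. e * ln (f e)) \<longlongrightarrow> - a) (at_right 0)" using Hf unfolding hasT_iff by auto
  obtain d2 where d2: "d2 > 0" "continuous_on {0<..<d2} g" "\<forall>e\<in>{0<..<d2}. 0 < g e"
    and L2: "((\<lambda>e. e * ln (g e)) \<longlongrightarrow> - b) (at_right 0)" using Hg unfolding hasT_iff by auto
  define d where "d = min d1 d2"
  have d0: "d > 0" using d1 d2 by (simp add: d_def)
  have gne: "\<forall>e\<in>{0<..<d}. g e \<noteq> 0"
  proof
    fix e assume "e \<in> {0<..<d}"
    then have "e \<in> {0<..<d2}" by (simp add: d_def)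
    then show "g e \<noteq> 0" using d2(3) by fastforce
  qed
  have "continuous_on {0<..<d} (\<lambda>e. f e / g e)"
    using gne by (intro continuous_intros continuous_on_subset[OF d1(2)] continuous_on_subset[OF d2(2)]) (auto simp: d_def)
  moreover have "\<forall>e\<in>{0<..<d}. 0 < f e / g e" using d1 d2 by (auto simp: d_def)
  moreover have "((\<lambda>e. e * ln (f e / g e)) \<longlongrightarrow> - (a - b)) (at_right 0)"
  proof -
    have "((\<lambda>e. e * ln (f e) - e * ln (g e)) \<longlongrightarrow> - a - - b) (at_right 0)" by (intro tendsto_diff L1 L2)
    moreover have "eventually (\<lambda>e. e * ln (f e) - e * ln (g e) = e * ln (f e / g e)) (at_right 0)"
      using ev_ivl[OF d0] proof (rule eventually_mono)
      fix e assume e: "e \<in> {0<..<d}"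
      then have "f e > 0" "g e > 0" using d1 d2 by (auto simp: d_def)
      then show "e * ln (f e) - e * ln (g e) = e * ln (f e / g e)" by (simp add: ln_div right_diff_distrib)
    qed
    ultimately show ?thesis by (simp add: tendsto_cong)
  qed
  ultimately show ?thesis unfolding hasT_iff using d1 d2 by (auto simp: d_def intro!: exI[of _ d])
qed

lemma ln_add_le: "0 < x \<Longrightarrow> 0 < (y::real) \<Longrightarrow> ln (x + y) \<le> ln 2 + max (ln x) (ln y)"
proof -
  assume x: "0 < x" and y: "0 < y"
  have "x + y \<le> 2 * max x y" by simp
  then have "ln (x + y) \<le> ln (2 * max x y)" using x y by (subst ln_le_cancel_iff) auto
  also have "\<dots> = ln 2 + ln (max x y)" using x y by (simp add: ln_mult)
  also have "ln (max x y) = max (ln x) (ln y)" using x y by (auto simp: max_def)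
  finally show ?thesis .
qed

lemma hasT_add: "hasT f a \<Longrightarrow> hasT g b \<Longrightarrow> hasT (\<lambda>e. f e + g e) (min a b)"
proof -
  assume Hf: "hasT f a" and Hg: "hasT g b"
  obtain d1 where d1: "d1 > 0" "continuous_on {0<..<d1} f" "\<forall>e\<in>{0<..<d1}. 0 < f e"
    and L1: "((\<lambda>e. e * ln (f e)) \<longlongrightarrow> - a) (at_right 0)" using Hf unfolding hasT_iff by auto
  obtain d2 where d2: "d2 > 0" "continuous_on {0<..<d2} g" "\<forall>e\<in>{0<..<d2}. 0 < g e"
    and L2: "((\<lambda>e. e * ln (g e)) \<longlongrightarrow> - b) (at_right 0)" using Hg unfolding hasT_iff by auto
  define d where "d = min d1 d2"
  have d0: "d > 0" using d1 d2 by (simp add: d_def)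
  have "continuous_on {0<..<d} (\<lambda>e. f e + g e)"
    by (intro continuous_intros continuous_on_subset[OF d1(2)] continuous_on_subset[OF d2(2)]) (auto simp: d_def)
  moreover have "\<forall>e\<in>{0<..<d}. 0 < f e + g e" using d1 d2 by (auto simp: d_def add_pos_pos)
  moreover have "((\<lambda>e. e * ln (f e + g e)) \<longlongrightarrow> - min a b) (at_right 0)"
  proof (rule tendsto_sandwich)
    have m: "- min a b = max (- a) (- b)" by simp
    show "((\<lambda>e. max (e * ln (f e)) (e * ln (g e))) \<longlongrightarrow> - min a b) (at_right 0)"
      unfolding m by (intro tendsto_max L1 L2)
    have z: "((\<lambda>e::real. e * ln 2) \<longlongrightarrow> 0) (at_right 0)"
      using tendsto_mult[OF tendsto_ident_at[of 0 "{0<..}"] tendsto_const[of "ln 2"]] by simp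
    show "((\<lambda>e. e * ln 2 + max (e * ln (f e)) (e * ln (g e))) \<longlongrightarrow> - min a b) (at_right 0)"
      using tendsto_add[OF z tendsto_max[OF L1 L2]] unfolding m by simp
    show "eventually (\<lambda>e. max (e * ln (f e)) (e * ln (g e)) \<le> e * ln (f e + g e)) (at_right 0)"
      using ev_ivl[OF d0]
    proof (rule eventually_mono)
      fix e assume e: "e \<in> {0<..<d}"
      then have fe: "f e > 0" and ge: "g e > 0" using d1 d2 by (auto simp: d_def)
      have "ln (f e) \<le> ln (f e + g e)" "ln (g e) \<le> ln (f e + g e)" using fe ge by auto
      then show "max (e * ln (f e)) (e * ln (g e)) \<le> e * ln (f e + g e)" using e by (auto intro: mult_left_mono)
    qed
    show "eventually (\<lambda>e. e * ln (f e + g e) \<le> e * ln 2 + max (e * ln (f e)) (e * ln (g e))) (at_right 0)"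
      using ev_ivl[OF d0]
    proof (rule eventually_mono)
      fix e assume e: "e \<in> {0<..<d}"
      then have fe: "f e > 0" and ge: "g e > 0" using d1 d2 by (auto simp: d_def)
      have "e * ln (f e + g e) \<le> e * (ln 2 + max (ln (f e)) (ln (g e)))"
        using ln_add_le[OF fe ge] e by (auto intro: mult_left_mono)
      also have "\<dots> = e * ln 2 + max (e * ln (f e)) (e * ln (g e))"
        using e by (simp add: distrib_left max_mult_distrib_left)
      finally show "e * ln (f e + g e) \<le> e * ln 2 + max (e * ln (f e)) (e * ln (g e))" .
    qed
  qed
  ultimately show ?thesis unfolding hasT_iff using d1 d2 by (auto simp: d_def intro!: exI[of _ d])
qed

fun tdd :: "(nat \<Rightarrow> nat) \<Rightarrow> (nat \<Rightarrow> nat) \<Rightarrow> nat \<Rightarrow> nat" where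
  "tdd c x 0 = c 1"
| "tdd c x (Suc n) = c (Suc (Suc n)) + (tdd c x n - x (Suc n))"

definition tmr :: "(nat \<Rightarrow> nat) \<Rightarrow> (nat \<Rightarrow> nat) \<Rightarrow> nat \<Rightarrow> nat" where
  "tmr c x i = (if i = 0 then 0 else min (x i) (tdd c x (i - 1)))"
definition tmx :: "(nat \<Rightarrow> nat) \<Rightarrow> (nat \<Rightarrow> nat) \<Rightarrow> nat \<Rightarrow> nat" where
  "tmx c x i = (if i = 0 then 0 else c (Suc i) + (x i - tdd c x (i - 1)))"

fun tact :: "(nat \<Rightarrow> nat) list \<Rightarrow> (nat \<Rightarrow> nat) \<Rightarrow> (nat \<Rightarrow> nat) list" where
  "tact [] x = [x]"
| "tact (r # rs) x = tmr r x # tact rs (tmx r x)"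

definition tacts :: "(nat \<Rightarrow> nat) list \<Rightarrow> (nat \<Rightarrow> nat) list" where
  "tacts xs = foldl tact [] xs"

definition good :: "(nat \<Rightarrow> real \<Rightarrow> real) \<Rightarrow> (nat \<Rightarrow> nat) \<Rightarrow> bool" where
  "good r R \<longleftrightarrow> (\<forall>i\<ge>1. hasT (r i) (real (R i)))"

lemma hasT_eqv: "hasT f a \<Longrightarrow> a = b \<Longrightarrow> hasT f b" by simp

lemma edd_good: "good r R \<Longrightarrow> good x X \<Longrightarrow> hasT (edd r x n) (real (tdd R X n))"
proof (induction n)
  case 0 then show ?case by (auto simp: good_def)
next
  case (Suc n)
  have r: "hasT (r (Suc (Suc n))) (real (R (Suc (Suc n))))" and x: "hasT (x (Suc n)) (real (X (Suc n)))"
    using Suc.prems by (auto simp: good_def)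
  have "hasT (\<lambda>e. r (Suc (Suc n)) e * edd r x n e / (edd r x n e + x (Suc n) e))
     (real (R (Suc (Suc n))) + real (tdd R X n) - min (real (tdd R X n)) (real (X (Suc n))))"
    by (intro hasT_div hasT_mult hasT_add r x Suc.IH Suc.prems)
  moreover have "edd r x (Suc n) = (\<lambda>e. r (Suc (Suc n)) e * edd r x n e / (edd r x n e + x (Suc n) e))"
    by (intro ext) simp
  moreover have "real (R (Suc (Suc n))) + real (tdd R X n) - min (real (tdd R X n)) (real (X (Suc n))) = real (tdd R X (Suc n))"
    by (simp add: of_nat_diff min_def)
  ultimately show ?case by simp
qed

lemma move_good: "good r R \<Longrightarrow> good x X \<Longrightarrow> good (emr r x) (tmr R X) \<and> good (emx r x) (tmx R X)"
proof -
  assume gr: "good r R" and gx: "good x X"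
  have gmr: "hasT (emr r x i) (real (tmr R X i))" if "i \<ge> 1" for i
  proof -
    have "hasT (\<lambda>e. x i e + edd r x (i - 1) e) (min (real (X i)) (real (tdd R X (i - 1))))"
      using gx that by (intro hasT_add edd_good gr gx) (auto simp: good_def)
    moreover have "emr r x i = (\<lambda>e. x i e + edd r x (i - 1) e)" by (intro ext) (simp add: emr_def)
    moreover have "min (real (X i)) (real (tdd R X (i - 1))) = real (tmr R X i)" using that by (simp add: tmr_def min_def)
    ultimately show ?thesis by simp
  qed
  have gmx: "hasT (emx r x i) (real (tmx R X i))" if "i \<ge> 1" for i
  proof -
    have "hasT (\<lambda>e. r (Suc i) e * x i e / emr r x i e) (real (R (Suc i)) + real (X i) - real (tmr R X i))"
      using gx gr that by (intro hasT_div hasT_mult gmr) (auto simp: good_def)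
    moreover have "emx r x i = (\<lambda>e. r (Suc i) e * x i e / emr r x i e)" by (intro ext) (simp add: emx_def)
    moreover have "real (R (Suc i)) + real (X i) - real (tmr R X i) = real (tmx R X i)" using that by (simp add: tmx_def tmr_def of_nat_diff min_def)
    ultimately show ?thesis by simp
  qed
  show ?thesis using gmr gmx by (auto simp: good_def)
qed

lemma tact_good: "list_all2 good rs Rs \<Longrightarrow> good x X \<Longrightarrow> list_all2 good (eact rs x) (tact Rs X)"
proof (induction rs arbitrary: Rs x X)
  case Nil then show ?case by simp
next
  case (Cons r rs)
  obtain R Rs' where Rs: "Rs = R # Rs'" using Cons.prems(1) by (cases Rs) auto
  then show ?case using Cons move_good[of r R x X] by auto
qed

lemma tacts_good: "list_all2 good xs Xs \<Longrightarrow> list_all2 good (eacts xs) (tacts Xs)"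
proof (induction xs arbitrary: Xs rule: rev_induct)
  case Nil then show ?case by (simp add: eacts_def tacts_def)
next
  case (snoc y xs)
  obtain Xs' Y where Xs: "Xs = Xs' @ [Y]" using snoc.prems
    by (cases Xs rule: rev_cases) (auto dest: list_all2_lengthD)
  then have "list_all2 good (xs @ [y]) (Xs' @ [Y])" using snoc.prems by simp
  then have "list_all2 good xs Xs'" "good y Y" proof -
    assume H: "list_all2 good (xs @ [y]) (Xs' @ [Y])"
    then have "length xs = length Xs'" by (auto dest: list_all2_lengthD)
    then have "list_all2 good xs Xs' \<and> list_all2 good [y] [Y]" using H by (simp add: list_all2_append)
    then show "list_all2 good xs Xs'" "good y Y" by auto
  qed
  then show ?case using snoc.IH Xs tact_good by (simp add: eacts_def tacts_def)
qed

fun Gl :: "bool list \<Rightarrow> nat \<Rightarrow> nat \<Rightarrow> nat set" where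
  "Gl [] p t = {}"
| "Gl (b # bs) p t = (if b then Gl bs (Suc p) t else if t = 0 then {} else insert p (Gl bs (Suc p) (t - 1)))"

fun cr :: "bool list \<Rightarrow> nat \<Rightarrow> bool list" where
  "cr [] t = []"
| "cr (b # bs) t = (if b then False # cr bs (Suc t) else (0 < t) # cr bs (t - 1))"

definition CS :: "bool list \<Rightarrow> nat \<Rightarrow> nat \<Rightarrow> nat set" where
  "CS ds q t = {a. q \<le> a \<and> a < q + length ds \<and> cr ds t ! (a - q)}"

lemma length_cr[simp]: "length (cr bs t) = length bs"
  by (induction bs arbitrary: t) auto

lemma CS_Nil[simp]: "CS [] q t = {}" by (simp add: CS_def)

lemma CS_True: "CS (True # ds) q t = CS ds (Suc q) (Suc t)"
  unfolding CS_def by (auto simp: nth_Cons' Suc_diff_Suc)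

lemma CS_False: "CS (False # ds) q t = (if t = 0 then CS ds (Suc q) 0 else insert q (CS ds (Suc q) (t - 1)))"
  unfolding CS_def by (auto simp: nth_Cons')

lemma Gl_0[simp]: "Gl ds q 0 = {}"
  by (induction ds arbitrary: q) auto

definition Eset :: "bool list \<Rightarrow> nat \<Rightarrow> nat \<Rightarrow> nat set" where
  "Eset ds q t = {c. q \<le> c \<and> c < q + length ds \<and> \<not> ds ! (c - q) \<and> c \<notin> Gl ds q t}"

lemma Gl_sub: "Gl ds q t \<subseteq> {q..<q + length ds}"
proof (induction ds arbitrary: q t)
  case (Cons b ds)
  then show ?case by (auto, fastforce+)
qed simp

lemma Gl_Suc: "Gl ds q (Suc t) = (if Eset ds q t = {} then Gl ds q t else insert (LEAST c. c \<in> Eset ds q t) (Gl ds q t))"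
proof (induction ds arbitrary: q t)
  case Nil then show ?case by (simp add: Eset_def)
next
  case (Cons b ds)
  show ?case
  proof (cases b)
    case True
    have "Eset (b # ds) q t = Eset ds (Suc q) t"
      using True unfolding Eset_def
      by (auto simp: nth_Cons')
    then show ?thesis using True Cons.IH[of "Suc q" t] by simp
  next
    case False
    show ?thesis
    proof (cases t)
      case 0
      have "q \<in> Eset (b # ds) q t" using False 0 by (simp add: Eset_def)
      moreover have "(LEAST c. c \<in> Eset (b # ds) q t) = q"
        by (rule Least_equality) (use False 0 in \<open>auto simp: Eset_def\<close>)
      ultimately show ?thesis using False 0 by auto
    next
      case (Suc t')
      have "Eset (b # ds) q t = Eset ds (Suc q) t'"
        using False Suc Gl_sub[of ds "Suc q" t'] unfolding Eset_def
        by (auto simp: nth_Cons')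
      then show ?thesis using False Suc Cons.IH[of "Suc q" t'] by auto
    qed
  qed
qed

definition step :: "bool list \<Rightarrow> nat \<Rightarrow> nat set \<Rightarrow> nat set" where
  "step bs = (\<lambda>a S. if (\<exists>c. a < c \<and> c < length bs \<and> \<not> bs ! c \<and> c \<notin> S)
                           then insert (LEAST c. a < c \<and> c < length bs \<and> \<not> bs ! c \<and> c \<notin> S) S
                           else S)"

lemma step_none: "\<not> (\<exists>c. a < c \<and> c < length bs \<and> \<not> bs ! c \<and> c \<notin> S) \<Longrightarrow> step bs a S = S"
  unfolding step_def by (simp only: if_False)

lemma step_some: "(\<exists>c. a < c \<and> c < length bs \<and> \<not> bs ! c \<and> c \<notin> S) \<Longrightarrow> step bs a S = insert (LEAST c. a < c \<and> c < length bs \<and> \<not> bs ! c \<and> c \<notin> S) S"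
  unfolding step_def by (simp only: if_True)

lemma tsstep_fold: "tsstep bs = fold (step bs) (filter (\<lambda>a. bs ! a) [0..<length bs]) {}"
  unfolding tsstep_def step_def ..

lemma fold_main:
  "drop p bs = ds \<Longrightarrow> p \<le> length bs \<Longrightarrow> S0 \<subseteq> {..<p} \<Longrightarrow>
   fold (step bs) (filter (\<lambda>a. bs ! a) [p..<length bs]) (S0 \<union> Gl ds p t) = S0 \<union> CS ds p t"
proof (induction ds arbitrary: p S0 t)
  case Nil
  then have "p = length bs" by simp
  then show ?case by simp
next
  case (Cons b ds)
  have pl: "p < length bs" using Cons.prems(1) by (metis drop_all list.distinct(1) not_le)
  have bp: "bs ! p = b" and dsd: "drop (Suc p) bs = ds"
    using Cons.prems(1) Cons_nth_drop_Suc[OF pl] by auto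
  have up: "[p..<length bs] = p # [Suc p..<length bs]" using pl by (simp add: upt_conv_Cons)
  have ld: "Suc p + length ds = length bs" using arg_cong[OF dsd, of length] pl by simp
  show ?case
  proof (cases b)
    case True
    have E: "{c. p < c \<and> c < length bs \<and> \<not> bs ! c \<and> c \<notin> S0 \<union> Gl ds (Suc p) t} = Eset ds (Suc p) t"
    proof (rule set_eqI)
      fix c
      have nd: "ds ! (c - Suc p) = bs ! c" if "p < c" "c < length bs"
        using that unfolding dsd[symmetric] by (simp add: nth_drop)
      have "c \<notin> S0" if "p < c" using that Cons.prems(3) by auto
      then show "c \<in> {c. p < c \<and> c < length bs \<and> \<not> bs ! c \<and> c \<notin> S0 \<union> Gl ds (Suc p) t} \<longleftrightarrow> c \<in> Eset ds (Suc p) t"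
      proof (cases "p < c \<and> c < length bs")
        case True
        have n1: "ds ! (c - Suc p) = bs ! c" using nd True by blast
        have n2: "c \<notin> S0" using \<open>p < c \<Longrightarrow> c \<notin> S0\<close> True by blast
        have n3: "Suc p \<le> c" "c < Suc p + length ds" using True ld by auto
        show ?thesis unfolding Eset_def mem_Collect_eq Un_iff n1 using n2 n3 True by blast
      next
        case False
        have "\<not> (Suc p \<le> c \<and> c < Suc p + length ds)" using False ld by auto
        then show ?thesis unfolding Eset_def mem_Collect_eq using False by blast
      qed
    qed
    have PE: "(p < c \<and> c < length bs \<and> \<not> bs ! c \<and> c \<notin> S0 \<union> Gl ds (Suc p) t) = (c \<in> Eset ds (Suc p) t)" for c
      using eqset_imp_iff[OF E, of c] by (simp only: mem_Collect_eq)
    have st: "step bs p (S0 \<union> Gl ds (Suc p) t) = S0 \<union> Gl ds (Suc p) (Suc t)"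
    proof (cases "Eset ds (Suc p) t = {}")
      case True
      then have "\<not> (\<exists>c. p < c \<and> c < length bs \<and> \<not> bs ! c \<and> c \<notin> S0 \<union> Gl ds (Suc p) t)" unfolding PE by blast
      then have "step bs p (S0 \<union> Gl ds (Suc p) t) = S0 \<union> Gl ds (Suc p) t" by (rule step_none)
      then show ?thesis using True Gl_Suc[of ds "Suc p" t] by simp
    next
      case False
      then have "(\<exists>c. p < c \<and> c < length bs \<and> \<not> bs ! c \<and> c \<notin> S0 \<union> Gl ds (Suc p) t)" unfolding PE by blast
      then have "step bs p (S0 \<union> Gl ds (Suc p) t) = insert (LEAST c. p < c \<and> c < length bs \<and> \<not> bs ! c \<and> c \<notin> S0 \<union> Gl ds (Suc p) t) (S0 \<union> Gl ds (Suc p) t)"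
        by (rule step_some)
      also have "\<dots> = insert (LEAST c. c \<in> Eset ds (Suc p) t) (S0 \<union> Gl ds (Suc p) t)" unfolding PE ..
      finally show ?thesis using False Gl_Suc[of ds "Suc p" t] by simp
    qed
    have "fold (step bs) (filter (\<lambda>a. bs ! a) [p..<length bs]) (S0 \<union> Gl (b # ds) p t)
        = fold (step bs) (filter (\<lambda>a. bs ! a) [Suc p..<length bs]) (S0 \<union> Gl ds (Suc p) (Suc t))"
      using True bp up st by simp
    also have "\<dots> = S0 \<union> CS ds (Suc p) (Suc t)"
      by (rule Cons.IH[OF dsd]) (use Cons.prems(3) pl in auto)
    finally show ?thesis using True by (simp add: CS_True)
  next
    case False
    show ?thesis
    proof (cases "t = 0")
      case True
      have "fold (step bs) (filter (\<lambda>a. bs ! a) [p..<length bs]) (S0 \<union> Gl (b # ds) p t)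
        = fold (step bs) (filter (\<lambda>a. bs ! a) [Suc p..<length bs]) (S0 \<union> Gl ds (Suc p) 0)"
        using False True bp up by simp
      also have "\<dots> = S0 \<union> CS ds (Suc p) 0"
        by (rule Cons.IH[OF dsd]) (use Cons.prems(3) pl in auto)
      finally show ?thesis using True False by (simp add: CS_False)
    next
      case t0: False
      have "fold (step bs) (filter (\<lambda>a. bs ! a) [p..<length bs]) (S0 \<union> Gl (b # ds) p t)
        = fold (step bs) (filter (\<lambda>a. bs ! a) [Suc p..<length bs]) (insert p S0 \<union> Gl ds (Suc p) (t - 1))"
        using False t0 bp up by simp
      also have "\<dots> = insert p S0 \<union> CS ds (Suc p) (t - 1)"
        by (rule Cons.IH[OF dsd]) (use Cons.prems(3) pl in auto)
      finally show ?thesis using t0 False by (simp add: CS_False)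
    qed
  qed
qed

lemma tsstep_cr: "a < length bs \<Longrightarrow> (a \<in> tsstep bs) = (cr bs 0 ! a)"
  using fold_main[of 0 bs bs "{}" 0] by (simp add: tsstep_fold CS_def)

lemma count_rep[simp]: "count_list (replicate n y) a = (if y = a then n else 0)"
  by (induction n) auto

fun cout :: "bool list \<Rightarrow> nat \<Rightarrow> nat" where
  "cout [] t = t"
| "cout (b # bs) t = (if b then cout bs (Suc t) else cout bs (t - 1))"

lemma cr_append: "cr (xs @ ys) t = cr xs t @ cr ys (cout xs t)"
  by (induction xs arbitrary: t) auto

lemma cout_append: "cout (xs @ ys) t = cout ys (cout xs t)"
  by (induction xs arbitrary: t) auto

lemma cr_repT: "cr (replicate c True @ ys) t = replicate c False @ cr ys (t + c)"
  by (induction c arbitrary: t) auto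
lemma cout_repT: "cout (replicate c True @ ys) t = cout ys (t + c)"
  by (induction c arbitrary: t) auto
lemma cr_repF: "cr (replicate x False) t = replicate (min t x) True @ replicate (x - t) False"
proof (induction x arbitrary: t)
  case (Suc x) then show ?case by (cases t) auto
qed simp
lemma cout_repF: "cout (replicate x False) t = t - x"
  by (induction x arbitrary: t) auto

definition O1 :: "((nat \<times> bool) \<times> bool) list \<Rightarrow> nat list" where
  "O1 ps = map (\<lambda>(u, v). fst u) (filter (\<lambda>(u, v). \<not> snd u \<and> v) ps)"
definition O2 :: "((nat \<times> bool) \<times> bool) list \<Rightarrow> nat list" where
  "O2 ps = map (\<lambda>(u, v). if snd u then fst u - 1 else fst u) (filter (\<lambda>(u, v). if snd u then fst u - 1 \<noteq> 0 else \<not> v) ps)"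

lemma O1_append[simp]: "O1 (xs @ ys) = O1 xs @ O1 ys" by (simp add: O1_def)
lemma O2_append[simp]: "O2 (xs @ ys) = O2 xs @ O2 ys" by (simp add: O2_def)

lemma map_filter_zip:
  assumes "length ys = length xs"
  shows "map (\<lambda>a. g (xs ! a) (ys ! a)) (filter (\<lambda>a. P (xs ! a) (ys ! a)) [0..<length xs])
       = map (\<lambda>(u, v). g u v) (filter (\<lambda>(u, v). P u v) (zip xs ys))"
proof -
  have z: "zip xs ys = map (\<lambda>a. (xs ! a, ys ! a)) [0..<length xs]"
    using assms by (intro nth_equalityI) auto
  show ?thesis unfolding z by (simp add: filter_map o_def)
qed

definition Z :: "nat \<Rightarrow> (nat \<times> bool) list \<Rightarrow> ((nat \<times> bool) \<times> bool) list" where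
  "Z t ps = zip ps (cr (map snd ps) t)"

lemma Z_append: "Z t (ps @ qs) = Z t ps @ Z (cout (map snd ps) t) qs"
  unfolding Z_def by (simp add: cr_append)

lemma bbrow_O: "bbrow C x = (O1 (Z 0 (cells C x)), O2 (Z 0 (cells C x)))"
proof -
  let ?cs = "cells C x"
  let ?bs = "map snd ?cs"
  let ?fl = "cr ?bs 0"
  have lfl: "length ?fl = length ?cs" by simp
  have mem: "a < length ?cs \<Longrightarrow> (a \<in> tsstep ?bs) = (?fl ! a)" for a
    using tsstep_cr[of a ?bs] by simp
  have f1: "filter (\<lambda>a. \<not> snd (?cs ! a) \<and> a \<in> tsstep ?bs) [0..<length ?cs]
        = filter (\<lambda>a. \<not> snd (?cs ! a) \<and> ?fl ! a) [0..<length ?cs]"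
    using mem by (intro filter_cong) auto
  have f2: "filter (\<lambda>a. if snd (?cs ! a) then fst (?cs ! a) - 1 \<noteq> 0 else a \<notin> tsstep ?bs) [0..<length ?cs]
        = filter (\<lambda>a. if snd (?cs ! a) then fst (?cs ! a) - 1 \<noteq> 0 else \<not> ?fl ! a) [0..<length ?cs]"
    using mem by (intro filter_cong) auto
  have "fst (bbrow C x) = O1 (Z 0 ?cs)"
    unfolding bbrow_def Let_def fst_conv f1 O1_def Z_def
    using map_filter_zip[OF lfl, of "\<lambda>u v. fst u" "\<lambda>u v. \<not> snd u \<and> v"] by simp
  moreover have "snd (bbrow C x) = O2 (Z 0 ?cs)"
    unfolding bbrow_def Let_def snd_conv f2 O2_def Z_def
    using map_filter_zip[OF lfl, of "\<lambda>u v. if snd u then fst u - 1 else fst u" "\<lambda>u v. if snd u then fst u - 1 \<noteq> 0 else \<not> v"] by simp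
  ultimately show ?thesis by (metis prod.collapse)
qed

definition blk :: "nat list \<Rightarrow> nat list \<Rightarrow> nat \<Rightarrow> (nat \<times> bool) list" where
  "blk C x k = replicate (count_list C k) (k, True) @ replicate (count_list x k) (k, False)"

lemma cells_blk: "cells C x = concat (map (blk C x) [1..<Suc (Max (insert 0 (set C \<union> set x)))])"
  unfolding cells_def blk_def ..

lemma zip_rep: "zip (replicate n a) (replicate n b) = replicate n (a, b)"
  by (induction n) auto

lemma Z_blk: "Z t (replicate c (k, True) @ replicate x (k, False))
   = replicate c ((k, True), False) @ replicate (min (t + c) x) ((k, False), True) @ replicate (x - (t + c)) ((k, False), False)"
proof -
  have ms: "map snd (replicate c (k, True) @ replicate x (k, False)) = replicate c True @ replicate x False" by simp
  have sp: "replicate x (k, False) = replicate (min (t + c) x) (k, False) @ replicate (x - (t + c)) (k, False)"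
    by (simp add: replicate_add[symmetric])
  show ?thesis unfolding Z_def ms cr_repT cr_repF
    by (subst sp, simp add: zip_append zip_rep)
qed

lemma cout_blk: "cout (map snd (replicate c (k, True) @ replicate x (k, False))) t = t + c - x"
proof -
  have ms: "map snd (replicate c (k, True) @ replicate x (k, False)) = replicate c True @ replicate x False" by simp
  show ?thesis unfolding ms cout_repT by (simp add: cout_repF)
qed

lemma O1_blk: "count_list (O1 (Z t (replicate c (k, True) @ replicate x (k, False)))) a = (if k = a then min (t + c) x else 0)"
  unfolding Z_blk by (simp add: O1_def filter_replicate)

lemma O2_blk: "count_list (O2 (Z t (replicate c (k, True) @ replicate x (k, False)))) a
   = (if k - 1 \<noteq> 0 \<and> k - 1 = a then c else 0) + (if k = a then x - (t + c) else 0)"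
  unfolding Z_blk by (simp add: O2_def filter_replicate)

definition tcar :: "(nat \<Rightarrow> nat) \<Rightarrow> (nat \<Rightarrow> nat) \<Rightarrow> nat \<Rightarrow> nat" where
  "tcar c x n = (if n = 0 then 0 else tdd c x (n - 1) - x n)"

lemma tcar_tdd: "tcar c x n + c (Suc n) = tdd c x n"
  by (cases n) (auto simp: tcar_def)

lemma blocks:
  fixes C x :: "nat list"
  defines "c \<equiv> \<lambda>k. count_list C k" and "xx \<equiv> \<lambda>k. count_list x k"
  shows "cout (map snd (concat (map (blk C x) [1..<Suc n]))) 0 = tcar c xx n
    \<and> count_list (O1 (Z 0 (concat (map (blk C x) [1..<Suc n])))) a = (\<Sum>k\<in>{1..n}. if k = a then min (tdd c xx (k - 1)) (xx k) else 0)
    \<and> count_list (O2 (Z 0 (concat (map (blk C x) [1..<Suc n])))) a = (\<Sum>k\<in>{1..n}. (if k - 1 \<noteq> 0 \<and> k - 1 = a then c k else 0) + (if k = a then xx k - tdd c xx (k - 1) else 0))"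
proof (induction n)
  case 0 then show ?case by (simp add: Z_def tcar_def O1_def O2_def)
next
  case (Suc n)
  let ?P = "concat (map (blk C x) [1..<Suc n])"
  have e: "concat (map (blk C x) [1..<Suc (Suc n)]) = ?P @ blk C x (Suc n)" by simp
  have tt: "tcar c xx n + c (Suc n) = tdd c xx n" by (rule tcar_tdd)
  have IH1: "cout (map snd ?P) 0 = tcar c xx n" using Suc.IH by blast
  have IH2: "count_list (O1 (Z 0 ?P)) a = (\<Sum>k\<in>{1..n}. if k = a then min (tdd c xx (k - 1)) (xx k) else 0)" using Suc.IH by blast
  have IH3: "count_list (O2 (Z 0 ?P)) a = (\<Sum>k\<in>{1..n}. (if k - 1 \<noteq> 0 \<and> k - 1 = a then c k else 0) + (if k = a then xx k - tdd c xx (k - 1) else 0))" using Suc.IH by blast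
  have bl: "blk C x (Suc n) = replicate (c (Suc n)) (Suc n, True) @ replicate (xx (Suc n)) (Suc n, False)"
    by (simp add: blk_def c_def xx_def)
  have co: "cout (map snd (?P @ blk C x (Suc n))) 0 = tcar c xx (Suc n)"
    unfolding map_append cout_append IH1 unfolding bl cout_blk tt by (simp add: tcar_def)
  have c1: "count_list (O1 (Z 0 (?P @ blk C x (Suc n)))) a = count_list (O1 (Z 0 ?P)) a + (if Suc n = a then min (tdd c xx n) (xx (Suc n)) else 0)"
    unfolding Z_append O1_append count_list_append IH1 unfolding bl O1_blk tt ..
  have c2: "count_list (O2 (Z 0 (?P @ blk C x (Suc n)))) a = count_list (O2 (Z 0 ?P)) a + ((if Suc n - 1 \<noteq> 0 \<and> Suc n - 1 = a then c (Suc n) else 0) + (if Suc n = a then xx (Suc n) - tdd c xx n else 0))"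
    unfolding Z_append O2_append count_list_append IH1 unfolding bl O2_blk tt ..
  have s1: "(\<Sum>k\<in>{1..Suc n}. if k = a then min (tdd c xx (k - 1)) (xx k) else 0) = (\<Sum>k\<in>{1..n}. if k = a then min (tdd c xx (k - 1)) (xx k) else 0) + (if Suc n = a then min (tdd c xx n) (xx (Suc n)) else 0)"
    by (subst sum.cl_ivl_Suc) auto
  have s2: "(\<Sum>k\<in>{1..Suc n}. (if k - 1 \<noteq> 0 \<and> k - 1 = a then c k else 0) + (if k = a then xx k - tdd c xx (k - 1) else 0))
     = (\<Sum>k\<in>{1..n}. (if k - 1 \<noteq> 0 \<and> k - 1 = a then c k else 0) + (if k = a then xx k - tdd c xx (k - 1) else 0)) + ((if Suc n - 1 \<noteq> 0 \<and> Suc n - 1 = a then c (Suc n) else 0) + (if Suc n = a then xx (Suc n) - tdd c xx n else 0))"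
    by (subst sum.cl_ivl_Suc) auto
  show ?case unfolding e using co c1 c2 IH2 IH3 s1 s2 by simp
qed

definition cnt :: "nat list \<Rightarrow> nat \<Rightarrow> nat" where "cnt l = (\<lambda>k. count_list l k)"

lemma cnt_big: "finite A \<Longrightarrow> set l \<subseteq> A \<Longrightarrow> Max (insert 0 A) < a \<Longrightarrow> count_list l a = 0"
proof -
  assume f: "finite A" and s: "set l \<subseteq> A" and m: "Max (insert 0 A) < a"
  have "a \<notin> set l"
  proof
    assume "a \<in> set l"
    then have "a \<le> Max (insert 0 A)" using s f by (intro Max_ge) auto
    then show False using m by simp
  qed
  then show ?thesis by simp
qed


lemma bbrow_cnt1: "cnt (fst (bbrow C x)) = tmr (cnt C) (cnt x)"
proof
  fix a
  define m where "m = Max (insert 0 (set C \<union> set x))"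
  have zC: "count_list C k = 0" if "m < k" for k using cnt_big[of "set C \<union> set x" C k] that by (simp add: m_def)
  have zx: "count_list x k = 0" if "m < k" for k using cnt_big[of "set C \<union> set x" x k] that by (simp add: m_def)
  have "cnt (fst (bbrow C x)) a = (\<Sum>k\<in>{1..m}. if k = a then min (tdd (cnt C) (cnt x) (k - 1)) (cnt x k) else 0)"
    using blocks[of C x m a] unfolding bbrow_O fst_conv cnt_def cells_blk m_def by simp
  also have "\<dots> = (if a \<in> {1..m} then min (tdd (cnt C) (cnt x) (a - 1)) (cnt x a) else 0)" by simp
  also have "\<dots> = tmr (cnt C) (cnt x) a"
    using zx[of a] by (auto simp: tmr_def cnt_def min_def)
  finally show "cnt (fst (bbrow C x)) a = tmr (cnt C) (cnt x) a" .
qed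

lemma bbrow_cnt2: "cnt (snd (bbrow C x)) = tmx (cnt C) (cnt x)"
proof
  fix a
  define m where "m = Max (insert 0 (set C \<union> set x))"
  have zC: "count_list C k = 0" if "m < k" for k using cnt_big[of "set C \<union> set x" C k] that by (simp add: m_def)
  have zx: "count_list x k = 0" if "m < k" for k using cnt_big[of "set C \<union> set x" x k] that by (simp add: m_def)
  have "cnt (snd (bbrow C x)) a = (\<Sum>k\<in>{1..m}. (if k - 1 \<noteq> 0 \<and> k - 1 = a then cnt C k else 0) + (if k = a then cnt x k - tdd (cnt C) (cnt x) (k - 1) else 0))"
    using blocks[of C x m a] unfolding bbrow_O snd_conv cnt_def cells_blk m_def by simp
  also have "\<dots> = (\<Sum>k\<in>{1..m}. if k = Suc a then (if a \<noteq> 0 then cnt C k else 0) else 0) + (\<Sum>k\<in>{1..m}. if k = a then cnt x k - tdd (cnt C) (cnt x) (k - 1) else 0)"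
    unfolding sum.distrib[symmetric] by (intro sum.cong refl) auto
  also have "\<dots> = (if Suc a \<in> {1..m} then (if a \<noteq> 0 then cnt C (Suc a) else 0) else 0) + (if a \<in> {1..m} then cnt x a - tdd (cnt C) (cnt x) (a - 1) else 0)"
    by simp
  also have "\<dots> = tmx (cnt C) (cnt x) a"
    using zx[of a] zC[of "Suc a"] by (auto simp: tmx_def cnt_def)
  finally show "cnt (snd (bbrow C x)) a = tmx (cnt C) (cnt x) a" .
qed

lemma act_cnt: "map cnt (act rows x) = tact (map cnt rows) (cnt x)"
proof (induction rows arbitrary: x)
  case Nil then show ?case by simp
next
  case (Cons r rs)
  obtain r' x' where b: "bbrow r x = (r', x')" by (cases "bbrow r x")
  have "cnt r' = tmr (cnt r) (cnt x)" "cnt x' = tmx (cnt r) (cnt x)"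
    using bbrow_cnt1[of r x] bbrow_cnt2[of r x] b by auto
  then show ?case using Cons.IH[of x'] b by simp
qed

lemma acts_cnt: "map cnt (acts xs) = tacts (map cnt xs)"
proof (induction xs rule: rev_induct)
  case Nil then show ?case by (simp add: acts_def tacts_def)
next
  case (snoc y xs)
  then show ?case using act_cnt[of "acts xs" y] by (simp add: acts_def tacts_def)
qed

lemma count_concat: "count_list (concat xss) a = sum_list (map (\<lambda>xs. count_list xs a) xss)"
  by (induction xss) auto

lemma warr_count:
  assumes fin: "finite {i. 1 \<le> i \<and> W i j \<noteq> 0}" and i1: "1 \<le> i"
  shows "count_list (warr W j) i = W i j"
proof -
  define M where "M = Max (insert 0 {i. 1 \<le> i \<and> W i j \<noteq> 0})"
  have "count_list (warr W j) i = (\<Sum>k\<in>set [1..<Suc M]. if k = i then W k j else 0)"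
    unfolding warr_def M_def[symmetric] count_concat map_map o_def count_rep
    by (subst interv_sum_list_conv_sum_set_nat) (rule sum.cong, auto)
  also have "\<dots> = (if i \<in> {1..M} then W i j else 0)" by simp
  also have "\<dots> = W i j"
  proof (cases "i \<le> M")
    case False
    have "W i j = 0"
    proof (rule ccontr)
      assume "W i j \<noteq> 0"
      then have "i \<le> M" unfolding M_def using fin i1 by (intro Max_ge) auto
      then show False using False by simp
    qed
    then show ?thesis by simp
  qed (use i1 in auto)
  finally show ?thesis .
qed

lemma mprod_congK: "list_all2 (eqK K) As Bs \<Longrightarrow> eqK K (mprod As) (mprod Bs)"
proof (induction As arbitrary: Bs)
  case Nil then show ?case by (simp add: mprod_def)
next
  case (Cons A As)
  then obtain B Bs' where "Bs = B # Bs'" by (cases Bs) auto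
  then show ?case using Cons by (auto simp: mprod_def intro: lmul_congK)
qed

lemma Fm_congK: "(\<And>i. 1 \<le> i \<Longrightarrow> i < K \<Longrightarrow> v i = w i) \<Longrightarrow> eqK K (Fm v) (Fm w)"
  unfolding eqK_def Fm_def by auto

theorem theorem3p4:
  shows "\<exists>N0::nat. \<forall>N\<ge>N0. \<forall>(W::nat \<Rightarrow> nat \<Rightarrow> nat) (V::nat \<Rightarrow> nat \<Rightarrow> real \<Rightarrow> real)
           (U::nat \<Rightarrow> nat \<Rightarrow> real \<Rightarrow> real).
      (\<forall>j\<le>N. finite {i. 1 \<le> i \<and> W i j \<noteq> 0})
      \<and> (\<forall>i j. 1 \<le> i \<and> j \<le> N \<longrightarrow> inM (V i j) \<and> trop (V i j) = real (W i j))
      \<and> (\<forall>i k. 1 \<le> i \<and> 1 \<le> k \<and> k \<le> N + 1 \<longrightarrow> inM (U i k))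
      \<and> (\<forall>a b. \<forall>\<^sub>F e in at_right 0.
            mprod (map (\<lambda>j. Fm (\<lambda>i. V i j e)) (rev [0..<Suc N])) a b
          = mprod (map (\<lambda>k. Fkm k (\<lambda>i. U i k e)) (rev [1..<N + 2])) a b)
      \<longrightarrow> (\<forall>i j. 1 \<le> i \<and> 1 \<le> j \<and> j \<le> N + 1 \<longrightarrow>
            real (count_list (acts (map (warr W) (rev [0..<Suc N])) ! (j - 1)) i) = trop (U i j))"
proof (intro exI[of _ 0] allI impI)
  fix N :: nat and W :: "nat \<Rightarrow> nat \<Rightarrow> nat" and V U :: "nat \<Rightarrow> nat \<Rightarrow> real \<Rightarrow> real" and i j :: nat
  assume H: "(\<forall>j\<le>N. finite {i. 1 \<le> i \<and> W i j \<noteq> 0})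
      \<and> (\<forall>i j. 1 \<le> i \<and> j \<le> N \<longrightarrow> inM (V i j) \<and> trop (V i j) = real (W i j))
      \<and> (\<forall>i k. 1 \<le> i \<and> 1 \<le> k \<and> k \<le> N + 1 \<longrightarrow> inM (U i k))
      \<and> (\<forall>a b. \<forall>\<^sub>F e in at_right 0.
            mprod (map (\<lambda>j. Fm (\<lambda>i. V i j e)) (rev [0..<Suc N])) a b
          = mprod (map (\<lambda>k. Fkm k (\<lambda>i. U i k e)) (rev [1..<N + 2])) a b)"
    and ij: "1 \<le> i \<and> 1 \<le> j \<and> j \<le> N + 1"
  have fin: "\<And>j. j \<le> N \<Longrightarrow> finite {i. 1 \<le> i \<and> W i j \<noteq> 0}" using H by blast
  have HV: "\<And>i j. 1 \<le> i \<Longrightarrow> j \<le> N \<Longrightarrow> hasT (V i j) (real (W i j))" using H by (auto simp: hasT_def)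
  have HM: "\<And>a b. \<forall>\<^sub>F e in at_right 0.
            mprod (map (\<lambda>j. Fm (\<lambda>i. V i j e)) (rev [0..<Suc N])) a b
          = mprod (map (\<lambda>k. Fkm k (\<lambda>i. U i k e)) (rev [1..<N + 2])) a b" using H by blast
  define SS where "SS = (\<Union>j'\<in>{..N}. {i. 1 \<le> i \<and> W i j' \<noteq> 0})"
  have finSS: "finite SS" unfolding SS_def using fin by auto
  define B where "B = Max (insert 0 SS)"
  have Wz: "W i' j' = 0" if "B < i'" "j' \<le> N" for i' j'
  proof (rule ccontr)
    assume "W i' j' \<noteq> 0"
    then have "i' \<in> SS" using that unfolding SS_def by auto
    then have "i' \<le> B" unfolding B_def using finSS by (intro Max_ge) auto
    then show False using that by simp
  qed
  define K where "K = B + i + j + 2"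
  define VT where "VT = (\<lambda>i' j'. if i' \<le> K then V i' j' else (\<lambda>e::real. 1::real))"
  define xs where "xs = map (\<lambda>j' i'. VT i' j') (rev [0..<Suc N])"
  define ws where "ws = map (warr W) (rev [0..<Suc N])"
  define jj where "jj = j - 1"
  have jjl: "jj < length xs" using ij unfolding xs_def jj_def by simp linarith
  have gxs: "list_all2 good xs (map cnt ws)"
    unfolding xs_def ws_def list_all2_conv_all_nth
  proof (intro conjI allI impI)
    fix n assume n: "n < length (map (\<lambda>j' i'. VT i' j') (rev [0..<Suc N]))"
    define j' where "j' = rev [0..<Suc N] ! n"
    have "rev [0..<Suc N] ! n = N - n" using n by (simp add: rev_nth del: upt_Suc)
    then have j'N: "j' \<le> N" unfolding j'_def by simp
    show "good (map (\<lambda>j' i'. VT i' j') (rev [0..<Suc N]) ! n) (map cnt (map (warr W) (rev [0..<Suc N])) ! n)"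
      unfolding good_def
    proof (intro allI impI)
      fix i' :: nat assume i': "1 \<le> i'"
      have c: "(map cnt (map (warr W) (rev [0..<Suc N])) ! n) i' = W i' j'"
        using n warr_count[of W j' i', OF fin[OF j'N] i'] by (simp add: j'_def cnt_def del: upt_Suc)
      have v: "(map (\<lambda>j' i'. VT i' j') (rev [0..<Suc N]) ! n) i' = VT i' j'"
        using n by (simp add: j'_def del: upt_Suc)
      show "hasT ((map (\<lambda>j' i'. VT i' j') (rev [0..<Suc N]) ! n) i') (real ((map cnt (map (warr W) (rev [0..<Suc N])) ! n) i'))"
      proof (cases "i' \<le> K")
        case True then show ?thesis unfolding c v unfolding VT_def using HV[OF i' j'N] by simp
      next
        case False
        then have "W i' j' = 0" using Wz[OF _ j'N] by (simp add: K_def)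
        then show ?thesis unfolding c v unfolding VT_def using False hasT_one by simp
      qed
    qed
  qed simp
  have g2: "list_all2 good (eacts xs) (map cnt (acts ws))"
    using tacts_good[OF gxs] by (simp add: acts_cnt)
  have hT: "hasT ((eacts xs ! jj) i) (real (count_list (acts ws ! jj) i))"
  proof -
    have le: "length (acts ws) = length (eacts xs)" using g2 by (simp add: list_all2_conv_all_nth)
    have "good (eacts xs ! jj) (map cnt (acts ws) ! jj)" using list_all2_nthD[OF g2] jjl by simp
    moreover have "map cnt (acts ws) ! jj = cnt (acts ws ! jj)" using le jjl by simp
    ultimately show ?thesis using ij by (simp add: good_def cnt_def)
  qed
  have EV1: "\<forall>\<^sub>F e in at_right 0. \<forall>p\<in>{1..K} \<times> {..N}. 0 < V (fst p) (snd p) e"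
    by (rule eventually_ball_finite) (auto intro: hasT_pos[OF HV])
  have EV2: "\<forall>\<^sub>F e in at_right 0. \<forall>p\<in>{p. fst p < K \<and> snd p \<le> fst p}.
       mprod (map (\<lambda>j. Fm (\<lambda>i. V i j e)) (rev [0..<Suc N])) (fst p) (snd p)
     = mprod (map (\<lambda>k. Fkm k (\<lambda>i. U i k e)) (rev [1..<N + 2])) (fst p) (snd p)"
  proof (rule eventually_ball_finite)
    show "finite {p. fst p < K \<and> snd p \<le> fst p}"
      by (rule finite_subset[of _ "{..<K} \<times> {..<K}"]) auto
  qed (use HM in auto)
  have "\<forall>\<^sub>F e in at_right 0. (eacts xs ! jj) i e = U i j e"
    using EV1 EV2
  proof (eventually_elim)
    case (elim e)
    have posV: "posat (\<lambda>i'. VT i' j') e" if "j' \<le> N" for j'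
      unfolding posat_def VT_def using elim(1) that by auto
    have pxs: "list_all (\<lambda>r. posat r e) xs" unfolding xs_def by (auto simp: list_all_iff posV)
    have A1: "eqL (mprod (map (\<lambda>v. Fm (atv v e)) xs)) (Pl (map (\<lambda>r. atv r e) (eacts xs)))"
      and pe: "list_all (\<lambda>r. posat r e) (eacts xs)" using eacts_eq[OF pxs] by auto
    have mx: "map (\<lambda>v. Fm (atv v e)) xs = map (\<lambda>j. Fm (\<lambda>i. VT i j e)) (rev [0..<Suc N])"
      unfolding xs_def by (simp add: atv_def)
    have A2: "eqK K (mprod (map (\<lambda>j. Fm (\<lambda>i. V i j e)) (rev [0..<Suc N]))) (mprod (map (\<lambda>j. Fm (\<lambda>i. VT i j e)) (rev [0..<Suc N])))"
      by (rule mprod_congK) (auto simp: list_all2_conv_all_nth VT_def simp del: upt_Suc intro!: Fm_congK)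
    have A3: "eqK K (mprod (map (\<lambda>j. Fm (\<lambda>i. V i j e)) (rev [0..<Suc N]))) (mprod (map (\<lambda>k. Fkm k (\<lambda>i. U i k e)) (rev [1..<N + 2])))"
      using elim(2) unfolding eqK_def by auto
    have ul: "[1..<N + 2] = [Suc 0..<Suc 0 + Suc N]" by simp
    have A4: "eqL (mprod (map (\<lambda>k. Fkm k (\<lambda>i. U i k e)) (rev [1..<N + 2]))) (Pl (map (\<lambda>k i. U i k e) [1..<N + 2]))"
      using mprod_Fkm[of "\<lambda>k i. U i k e" 0 "Suc N"] unfolding ul by simp
    have A: "eqK K (Pl (map (\<lambda>r. atv r e) (eacts xs))) (Pl (map (\<lambda>k i. U i k e) [1..<N + 2]))"
    proof -
      have "eqK K (Pl (map (\<lambda>r. atv r e) (eacts xs))) (mprod (map (\<lambda>j. Fm (\<lambda>i. VT i j e)) (rev [0..<Suc N])))"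
        using eqL_K[OF eqL_sym[OF A1]] mx by simp
      then show ?thesis using eqK_sym[OF A2] A3 eqL_K[OF A4] by (meson eqK_trans)
    qed
    have "(map (\<lambda>k i. U i k e) [1..<N + 2] ! jj) i = (map (\<lambda>r. atv r e) (eacts xs) ! jj) i"
    proof (rule uniq[OF _ _ A])
      show "list_all (\<lambda>u. \<forall>i\<ge>1. 0 < u i) (map (\<lambda>r. atv r e) (eacts xs))"
        using pe by (auto simp: list_all_iff posat_def atv_def)
    qed (use jjl ij in \<open>auto simp: xs_def jj_def K_def\<close>)
    moreover have "map (\<lambda>k i. U i k e) [1..<N + 2] ! jj = (\<lambda>i. U i j e)"
    proof -
      have "jj < length [1..<N + 2]" using ij unfolding jj_def by simp linarith
      moreover have "[1..<N + 2] ! jj = j" using ij by (simp add: jj_def nth_upt del: upt_Suc)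
      ultimately show ?thesis by (simp del: upt_Suc)
    qed
    moreover have "map (\<lambda>r. atv r e) (eacts xs) ! jj = atv (eacts xs ! jj) e" using jjl by simp
    ultimately show ?case by (simp add: atv_def del: upt_Suc)
  qed
  then have "hasT (U i j) (real (count_list (acts ws ! jj) i))"
    by (rule hasT_cong[OF hT])
  then show "real (count_list (acts (map (warr W) (rev [0..<Suc N])) ! (j - 1)) i) = trop (U i j)"
    by (simp add: hasT_def ws_def jj_def)
qed

end
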